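(* Let $d$ be a positive integer and let $\mu$ be a Borel probability measure on $\mathbb{S}^{d-1}$. Then $$\int_{\mathbb{S}^{d-1}}\int_{\mathbb{S}^{d-1}}\int_{\mathbb{S}^{d-1}}\left|\langle x,y\rangle\langle x,z\rangle\langle y,z\rangle\right|\,d\mu(x)\,d\mu(y)\,d\mu(z)\ge\frac{1}{d^2},$$ with equality if and only if $\mu$ is isotropic and $\langle x,y\rangle\langle x,z\rangle\langle y,z\rangle\ge 0$ for all points $x,y,z$ in the support of $\mu$.
   Context: A Borel probability measure $\mu$ on $\mathbb{S}^{d-1}$ is isotropic if $\int_{\mathbb{S}^{d-1}}xx^T\,d\mu(x)=\frac1d I_d$, equivalently $\int\langle x,y\rangle^2\,d\mu(x)=\frac1d$ for every $y\in\mathbb{S}^{d-1}$. *)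

theory Defs
  imports "HOL-Probability.Probability"
begin

definition measure_support :: "'a::topological_space measure \<Rightarrow> 'a set" where
  "measure_support M = {x. \<forall>U. open U \<and> x \<in> U \<longrightarrow> emeasure M U > 0}"

definition isotropic :: "'a::euclidean_space measure \<Rightarrow> bool" where
  "isotropic M \<longleftrightarrow>
     (\<forall>i\<in>Basis. \<forall>j\<in>Basis.
        (\<integral>x. (x \<bullet> i) * (x \<bullet> j) \<partial>M) = (if i = j then 1 / real DIM('a) else 0))"

end

theory Submission
  imports Defs
begin

locale sph = prob_space \<mu> for \<mu> :: "'a::euclidean_space measure" +
  assumes sets_eq[measurable_cong]: "sets \<mu> = sets borel"
    and sph: "emeasure \<mu> (sphere 0 1) = 1"
begin

lemma AE_S: "AE x in \<mu>. norm x = 1"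
proof -
  have "prob (sphere 0 1) = 1" using sph by (simp add: emeasure_eq_measure)
  from AE_prob_1[OF this] show ?thesis by auto
qed

lemma G1:
  fixes g :: "'a \<Rightarrow> real"
  assumes "g \<in> borel_measurable borel" "\<And>x. norm x = 1 \<Longrightarrow> \<bar>g x\<bar> \<le> C"
  shows "integrable \<mu> g"
proof (rule integrable_const_bound[where B=C])
  show "AE x in \<mu>. norm (g x) \<le> C" using AE_S by eventually_elim (use assms in auto)
  show "g \<in> borel_measurable \<mu>" using assms(1) by (simp add: measurable_cong_sets[OF sets_eq refl])
qed

lemma S_ne: "\<exists>x::'a. norm x = 1"
  using vector_choose_size[of 1] by auto

lemma G2:
  fixes g :: "'a \<Rightarrow> real"
  assumes "\<And>x. norm x = 1 \<Longrightarrow> \<bar>g x\<bar> \<le> C"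
  shows "\<bar>integral\<^sup>L \<mu> g\<bar> \<le> C"
proof -
  have C0: "0 \<le> C" using S_ne assms by force
  show ?thesis
  proof (cases "integrable \<mu> g")
    case True
    have "\<bar>integral\<^sup>L \<mu> g\<bar> \<le> (\<integral>x. \<bar>g x\<bar> \<partial>\<mu>)"
      using integral_norm_bound[of \<mu> g] by simp
    also have "\<dots> \<le> (\<integral>x. C \<partial>\<mu>)"
      using True AE_S by (intro integral_mono_AE) (auto elim!: eventually_mono intro: assms)
    finally show ?thesis by (simp add: prob_space)
  next
    case False then show ?thesis using C0 by (simp add: not_integrable_integral_eq)
  qed
qed

lemma AE_pick:
  assumes "AE x in \<mu>. P x" "U \<in> sets \<mu>" "emeasure \<mu> U > 0"
  shows "\<exists>x\<in>U. P x"
proof (rule ccontr)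
  assume nt: "\<not> ?thesis"
  from assms(1) obtain N where N: "{x \<in> space \<mu>. \<not> P x} \<subseteq> N" "emeasure \<mu> N = 0" "N \<in> sets \<mu>"
    by (rule AE_E)
  have "U \<subseteq> N" using N(1) nt sets.sets_into_space[OF assms(2)] by auto
  then have "emeasure \<mu> U \<le> emeasure \<mu> N" by (rule emeasure_mono[OF _ N(3)])
  then show False using assms(3) N(2) by simp
qed

lemma AE_supp: "AE x in \<mu>. x \<in> measure_support \<mu>"
proof -
  define F where "F = {U::'a set. open U \<and> emeasure \<mu> U = 0}"
  obtain F' where F': "F' \<subseteq> F" "countable F'" "\<Union>F' = \<Union>F"
    using Lindelof[of F] unfolding F_def by blast
  have "(\<Union>U\<in>F'. U) \<in> null_sets \<mu>"
    using F' by (intro null_sets_UN') (auto simp: F_def null_sets_def sets_eq)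
  moreover have "{x \<in> space \<mu>. \<not> x \<in> measure_support \<mu>} \<subseteq> (\<Union>U\<in>F'. U)"
    using F'(3) by (auto simp: measure_support_def F_def not_less)
  ultimately show ?thesis by (rule AE_I')
qed

definition Bf :: "'a \<Rightarrow> 'a \<Rightarrow> real" where
  "Bf u w = (\<integral>x. (x \<bullet> u) * (x \<bullet> w) \<partial>\<mu>)"

lemma absin: "norm x = 1 \<Longrightarrow> \<bar>x \<bullet> u\<bar> \<le> norm u"
  using Cauchy_Schwarz_ineq2[of x u] by simp

lemma intB: "integrable \<mu> (\<lambda>x. (x \<bullet> u) * (x \<bullet> w))"
proof (rule G1[where C="norm u * norm w"])
  fix x :: 'a assume "norm x = 1"
  then show "\<bar>(x \<bullet> u) * (x \<bullet> w)\<bar> \<le> norm u * norm w"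
    unfolding abs_mult by (intro mult_mono absin) auto
qed simp

lemma B_bound: "\<bar>Bf u w\<bar> \<le> norm u * norm w"
  unfolding Bf_def
proof (rule G2)
  fix x :: 'a assume "norm x = 1"
  then show "\<bar>(x \<bullet> u) * (x \<bullet> w)\<bar> \<le> norm u * norm w"
    unfolding abs_mult by (intro mult_mono absin) auto
qed

lemma B_sym: "Bf u w = Bf w u"
  unfolding Bf_def by (simp add: mult.commute)

lemma inner_exp: "(x::'a) \<bullet> u = (\<Sum>i\<in>Basis. (u \<bullet> i) * (x \<bullet> i))"
  by (subst euclidean_inner) (simp add: mult.commute)

lemma B_lin: "Bf u w = (\<Sum>i\<in>Basis. (u \<bullet> i) * Bf i w)"
proof -
  have "Bf u w = (\<integral>x. (\<Sum>i\<in>Basis. (u \<bullet> i) * ((x \<bullet> i) * (x \<bullet> w))) \<partial>\<mu>)"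
    unfolding Bf_def by (rule Bochner_Integration.integral_cong[OF refl])
       (subst inner_exp, simp add: sum_distrib_right mult.assoc)
  also have "\<dots> = (\<Sum>i\<in>Basis. (u \<bullet> i) * Bf i w)"
    unfolding Bf_def by (subst Bochner_Integration.integral_sum[where f="\<lambda>i x. (u \<bullet> i) * ((x \<bullet> i) * (x \<bullet> w))"]) (auto intro!: integrable_mult_right intB)
  finally show ?thesis .
qed

lemma B_lin2: "Bf u w = (\<Sum>i\<in>Basis. (w \<bullet> i) * Bf u i)"
  using B_lin[of w u] by (simp add: B_sym)

lemma B_meas[measurable]: "(\<lambda>w. Bf u w) \<in> borel_measurable borel"
  by (subst B_lin2) measurable

lemma inner1: "(\<integral>x. (x \<bullet> y) * (x \<bullet> z) * (y \<bullet> z) \<partial>\<mu>) = Bf y z * (y \<bullet> z)"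
  unfolding Bf_def by simp

lemma inner2: "(\<integral>y. Bf y z * (y \<bullet> z) \<partial>\<mu>) = (\<Sum>i\<in>Basis. (Bf i z)\<^sup>2)"
proof -
  have "(\<integral>y. Bf y z * (y \<bullet> z) \<partial>\<mu>) = (\<integral>y. (\<Sum>i\<in>Basis. Bf i z * ((y \<bullet> i) * (y \<bullet> z))) \<partial>\<mu>)"
    by (rule Bochner_Integration.integral_cong[OF refl])
       (subst B_lin, simp add: sum_distrib_right sum_distrib_left mult_ac)
  also have "\<dots> = (\<Sum>i\<in>Basis. Bf i z * Bf i z)"
    by (subst Bochner_Integration.integral_sum[where f="\<lambda>i y. Bf i z * ((y \<bullet> i) * (y \<bullet> z))"])
      (auto intro!: integrable_mult_right intB simp: Bf_def[of _ z])
  finally show ?thesis by (simp add: power2_eq_square)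
qed

lemma Tform: "(\<integral>z. \<integral>y. \<integral>x. (x \<bullet> y) * (x \<bullet> z) * (y \<bullet> z) \<partial>\<mu> \<partial>\<mu> \<partial>\<mu>)
   = (\<integral>z. (\<Sum>i\<in>Basis. (Bf i z)\<^sup>2) \<partial>\<mu>)"
  by (simp only: inner1 inner2)

lemma meas_test: "(\<lambda>y. \<integral>x. \<bar>(x \<bullet> y) * (x \<bullet> z) * (y \<bullet> z)\<bar> \<partial>\<mu>) \<in> borel_measurable \<mu>"
  by measurable

lemma meas_test2: "(\<lambda>z. \<integral>y. \<integral>x. \<bar>(x \<bullet> y) * (x \<bullet> z) * (y \<bullet> z)\<bar> \<partial>\<mu> \<partial>\<mu>) \<in> borel_measurable \<mu>"
  by measurable

lemma Bzz: "Bf z z = (\<Sum>i\<in>Basis. (z \<bullet> i) * Bf i z)"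
  by (rule B_lin)

lemma Bzz_meas[measurable]: "(\<lambda>z. Bf z z) \<in> borel_measurable borel"
  by (subst Bzz) measurable

lemma Bi_bound: "i \<in> Basis \<Longrightarrow> norm z = 1 \<Longrightarrow> \<bar>Bf i z\<bar> \<le> 1"
  using B_bound[of i z] by simp

lemma P1: "norm z = 1 \<Longrightarrow> (Bf z z)\<^sup>2 \<le> (\<Sum>i\<in>Basis. (Bf i z)\<^sup>2)"
proof -
  assume z: "norm z = 1"
  have "(Bf z z)\<^sup>2 \<le> (\<Sum>i\<in>Basis. (z \<bullet> i)\<^sup>2) * (\<Sum>i\<in>Basis. (Bf i z)\<^sup>2)"
    unfolding Bzz by (rule Cauchy_Schwarz_ineq_sum)
  also have "(\<Sum>i\<in>Basis. (z \<bullet> i)\<^sup>2) = z \<bullet> z"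
    by (subst euclidean_inner[of z z]) (simp add: power2_eq_square)
  also have "\<dots> = 1" using z by (simp add: power2_norm_eq_inner[symmetric])
  finally show ?thesis by simp
qed

lemma int_sumsq: "integrable \<mu> (\<lambda>z. \<Sum>i\<in>Basis. (Bf i z)\<^sup>2)"
proof (rule G1[where C="real DIM('a)"])
  fix z :: 'a assume z: "norm z = 1"
  have "(\<Sum>i\<in>Basis. (Bf i z)\<^sup>2) \<le> (\<Sum>i\<in>(Basis::'a set). 1)"
  proof (rule sum_mono)
    fix i :: 'a assume "i \<in> Basis"
    then have "\<bar>Bf i z\<bar> \<le> 1" using Bi_bound z by blast
    then show "(Bf i z)\<^sup>2 \<le> 1" using abs_square_le_1 by blast
  qed
  then show "\<bar>\<Sum>i\<in>Basis. (Bf i z)\<^sup>2\<bar> \<le> real DIM('a)" by (simp add: sum_nonneg)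
qed measurable

lemma Bzz_bound: "norm z = 1 \<Longrightarrow> \<bar>Bf z z\<bar> \<le> 1"
  using B_bound[of z z] by simp

lemma int_q: "integrable \<mu> (\<lambda>z. Bf z z)"
  by (rule G1[where C=1]) (auto intro: Bzz_bound)

lemma int_q2: "integrable \<mu> (\<lambda>z. (Bf z z)\<^sup>2)"
proof (rule G1[where C=1])
  fix z :: 'a assume "norm z = 1"
  then have "\<bar>Bf z z\<bar> \<le> 1" by (rule Bzz_bound)
  then show "\<bar>(Bf z z)\<^sup>2\<bar> \<le> 1" by (simp add: abs_square_le_1)
qed measurable

lemma T_ge_q2: "(\<integral>z. (Bf z z)\<^sup>2 \<partial>\<mu>) \<le> (\<integral>z. (\<Sum>i\<in>Basis. (Bf i z)\<^sup>2) \<partial>\<mu>)"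
  using AE_S by (intro integral_mono_AE int_q2 int_sumsq) (auto elim!: eventually_mono intro: P1)

lemma var_le: "(\<integral>z. Bf z z \<partial>\<mu>)\<^sup>2 \<le> (\<integral>z. (Bf z z)\<^sup>2 \<partial>\<mu>)"
proof -
  define c where "c = (\<integral>z. Bf z z \<partial>\<mu>)"
  have "0 \<le> (\<integral>z. (Bf z z - c)\<^sup>2 \<partial>\<mu>)" by simp
  also have "(\<integral>z. (Bf z z - c)\<^sup>2 \<partial>\<mu>) = (\<integral>z. ((Bf z z)\<^sup>2 - 2 * c * Bf z z + c\<^sup>2) \<partial>\<mu>)"
    by (rule Bochner_Integration.integral_cong) (auto simp: power2_diff algebra_simps)
  also have "\<dots> = (\<integral>z. (Bf z z)\<^sup>2 \<partial>\<mu>) - 2 * c * c + c\<^sup>2"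
    using int_q int_q2 by (simp add: c_def prob_space)
  finally show ?thesis by (simp add: c_def power2_eq_square)
qed

lemma int_q_val: "(\<integral>z. Bf z z \<partial>\<mu>) = (\<Sum>i\<in>Basis. \<Sum>j\<in>Basis. (Bf i j)\<^sup>2)"
proof -
  have "(\<integral>z. Bf z z \<partial>\<mu>) = (\<integral>z. (\<Sum>i\<in>Basis. \<Sum>j\<in>Basis. Bf i j * ((z \<bullet> i) * (z \<bullet> j))) \<partial>\<mu>)"
  proof (rule Bochner_Integration.integral_cong[OF refl])
    fix z :: 'a
    show "Bf z z = (\<Sum>i\<in>Basis. \<Sum>j\<in>Basis. Bf i j * ((z \<bullet> i) * (z \<bullet> j)))"
      by (subst Bzz, subst B_lin2) (simp add: sum_distrib_left mult_ac)
  qed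
  also have "\<dots> = (\<Sum>i\<in>Basis. \<Sum>j\<in>Basis. Bf i j * Bf i j)"
    by (subst Bochner_Integration.integral_sum, auto intro!: Bochner_Integration.integrable_sum integrable_mult_right intB,
        rule sum.cong[OF refl], subst Bochner_Integration.integral_sum, auto intro!: integrable_mult_right intB simp: Bf_def)
  finally show ?thesis by (simp add: power2_eq_square)
qed

lemma trace1: "(\<Sum>i\<in>Basis. Bf i i) = 1"
proof -
  have "(\<Sum>i\<in>Basis. Bf i i) = (\<integral>x. (\<Sum>i\<in>Basis. (x \<bullet> i) * (x \<bullet> i)) \<partial>\<mu>)"
    unfolding Bf_def by (simp add: Bochner_Integration.integral_sum intB)
  also have "\<dots> = (\<integral>x. 1 \<partial>\<mu>)"
  proof (rule integral_cong_AE)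
    show "AE x in \<mu>. (\<Sum>i\<in>Basis. (x \<bullet> i) * (x \<bullet> i)) = 1"
      using AE_S by eventually_elim (simp add: euclidean_inner[symmetric] power2_norm_eq_inner[symmetric])
  qed (auto simp: measurable_cong_sets[OF sets_eq refl])
  finally show ?thesis by (simp add: prob_space)
qed

lemma G1':
  fixes g :: "'a \<Rightarrow> real"
  assumes "g \<in> borel_measurable \<mu>" "\<And>x. norm x = 1 \<Longrightarrow> \<bar>g x\<bar> \<le> C"
  shows "integrable \<mu> g"
proof (rule integrable_const_bound[where B=C])
  show "AE x in \<mu>. norm (g x) \<le> C" using AE_S by eventually_elim (use assms in auto)
qed fact

definition ff :: "'a \<Rightarrow> 'a \<Rightarrow> 'a \<Rightarrow> real" where
  "ff x y z = (x \<bullet> y) * (x \<bullet> z) * (y \<bullet> z)"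

definition hh :: "'a \<Rightarrow> 'a \<Rightarrow> 'a \<Rightarrow> real" where
  "hh x y z = \<bar>ff x y z\<bar> - ff x y z"

lemma hh_nonneg: "0 \<le> hh x y z"
  unfolding hh_def by simp


lemma fbound: "norm x = 1 \<Longrightarrow> \<bar>ff x y z\<bar> \<le> (norm y * norm z)\<^sup>2"
proof -
  assume x: "norm x = 1"
  have "\<bar>ff x y z\<bar> = \<bar>x \<bullet> y\<bar> * \<bar>x \<bullet> z\<bar> * \<bar>y \<bullet> z\<bar>" unfolding ff_def abs_mult ..
  also have "\<dots> \<le> norm y * norm z * (norm y * norm z)"
    using absin[OF x, of y] absin[OF x, of z] Cauchy_Schwarz_ineq2[of y z]
    by (intro mult_mono) auto
  finally show ?thesis by (simp add: power2_eq_square)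
qed

lemma I1a: "integrable \<mu> (\<lambda>x. \<bar>ff x y z\<bar>)"
  by (rule G1'[where C="(norm y * norm z)\<^sup>2"]) (auto simp: ff_def fbound[unfolded ff_def])

lemma I1b: "integrable \<mu> (\<lambda>x. ff x y z)"
  by (rule G1'[where C="(norm y * norm z)\<^sup>2"]) (auto simp: ff_def fbound[unfolded ff_def])

lemma A2_bound: "norm y = 1 \<Longrightarrow> \<bar>\<integral>x. \<bar>ff x y z\<bar> \<partial>\<mu>\<bar> \<le> (norm z)\<^sup>2"
  using G2[of "\<lambda>x. \<bar>ff x y z\<bar>" "(norm y * norm z)\<^sup>2"] fbound[of _ y z] by simp

lemma I2a: "integrable \<mu> (\<lambda>y. \<integral>x. \<bar>ff x y z\<bar> \<partial>\<mu>)"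
proof (rule G1'[where C="(norm z)\<^sup>2"])
  show "(\<lambda>y. \<integral>x. \<bar>ff x y z\<bar> \<partial>\<mu>) \<in> borel_measurable \<mu>" unfolding ff_def by measurable
qed (rule A2_bound)

lemma F2_eq: "(\<integral>x. ff x y z \<partial>\<mu>) = Bf y z * (y \<bullet> z)"
  unfolding ff_def by (rule inner1)

lemma I2b: "integrable \<mu> (\<lambda>y. Bf y z * (y \<bullet> z))"
proof (rule G1'[where C="(norm z)\<^sup>2"])
  show "(\<lambda>y. Bf y z * (y \<bullet> z)) \<in> borel_measurable \<mu>"
    by (subst B_sym) measurable
  fix y :: 'a assume y: "norm y = 1"
  have "\<bar>Bf y z * (y \<bullet> z)\<bar> \<le> norm z * norm z"
    unfolding abs_mult using B_bound[of y z] absin[OF y, of z] y by (intro mult_mono) auto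
  then show "\<bar>Bf y z * (y \<bullet> z)\<bar> \<le> (norm z)\<^sup>2" by (simp add: power2_eq_square)
qed

lemma H2_eq: "(\<integral>x. hh x y z \<partial>\<mu>) = (\<integral>x. \<bar>ff x y z\<bar> \<partial>\<mu>) - Bf y z * (y \<bullet> z)"
  unfolding hh_def using I1a I1b by (simp add: F2_eq)

lemma I1h: "integrable \<mu> (\<lambda>x. hh x y z)"
  unfolding hh_def using I1a I1b by (rule Bochner_Integration.integrable_diff)

lemma I2h: "integrable \<mu> (\<lambda>y. \<integral>x. hh x y z \<partial>\<mu>)"
  unfolding H2_eq using I2a I2b by (rule Bochner_Integration.integrable_diff)

lemma A1_bound: "norm z = 1 \<Longrightarrow> \<bar>\<integral>y. \<integral>x. \<bar>ff x y z\<bar> \<partial>\<mu> \<partial>\<mu>\<bar> \<le> 1"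
  using G2[of "\<lambda>y. \<integral>x. \<bar>ff x y z\<bar> \<partial>\<mu>" 1] A2_bound[of _ z] by simp

lemma I3a: "integrable \<mu> (\<lambda>z. \<integral>y. \<integral>x. \<bar>ff x y z\<bar> \<partial>\<mu> \<partial>\<mu>)"
proof (rule G1'[where C=1])
  show "(\<lambda>z. \<integral>y. \<integral>x. \<bar>ff x y z\<bar> \<partial>\<mu> \<partial>\<mu>) \<in> borel_measurable \<mu>" unfolding ff_def by measurable
qed (rule A1_bound)

lemma int_sumsq': "integrable \<mu> (\<lambda>z. \<integral>y. Bf y z * (y \<bullet> z) \<partial>\<mu>)"
  unfolding inner2 by (rule int_sumsq)

lemma H1_eq: "(\<integral>y. \<integral>x. hh x y z \<partial>\<mu> \<partial>\<mu>) = (\<integral>y. \<integral>x. \<bar>ff x y z\<bar> \<partial>\<mu> \<partial>\<mu>) - (\<Sum>i\<in>Basis. (Bf i z)\<^sup>2)"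
  unfolding H2_eq using I2a I2b by (simp add: inner2)

lemma I3h: "integrable \<mu> (\<lambda>z. \<integral>y. \<integral>x. hh x y z \<partial>\<mu> \<partial>\<mu>)"
  unfolding H1_eq using I3a int_sumsq by (rule Bochner_Integration.integrable_diff)

lemma D_eq: "(\<integral>z. \<integral>y. \<integral>x. \<bar>ff x y z\<bar> \<partial>\<mu> \<partial>\<mu> \<partial>\<mu>)
   = (\<integral>z. (\<Sum>i\<in>Basis. (Bf i z)\<^sup>2) \<partial>\<mu>) + (\<integral>z. \<integral>y. \<integral>x. hh x y z \<partial>\<mu> \<partial>\<mu> \<partial>\<mu>)"
  unfolding H1_eq using I3a int_sumsq by simp

lemma D_nonneg: "0 \<le> (\<integral>z. \<integral>y. \<integral>x. hh x y z \<partial>\<mu> \<partial>\<mu> \<partial>\<mu>)"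
  by (intro Bochner_Integration.integral_nonneg hh_nonneg)

lemma open_sets: "open U \<Longrightarrow> U \<in> sets \<mu>"
  by (simp add: sets_eq)

lemma D_zero_iff: "(\<integral>z. \<integral>y. \<integral>x. hh x y z \<partial>\<mu> \<partial>\<mu> \<partial>\<mu>) = 0 \<longleftrightarrow>
   (\<forall>x\<in>measure_support \<mu>. \<forall>y\<in>measure_support \<mu>. \<forall>z\<in>measure_support \<mu>. ff x y z \<ge> 0)"
  (is "?D = 0 \<longleftrightarrow> ?P")
proof
  assume P: ?P
  show "?D = 0"
  proof (rule integral_eq_zero_AE)
    show "AE z in \<mu>. (\<integral>y. \<integral>x. hh x y z \<partial>\<mu> \<partial>\<mu>) = 0"
      using AE_supp
    proof eventually_elim
      case (elim z)
      show ?case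
      proof (rule integral_eq_zero_AE)
        show "AE y in \<mu>. (\<integral>x. hh x y z \<partial>\<mu>) = 0"
          using AE_supp
        proof eventually_elim
          case (elim y)
          show ?case
            by (rule integral_eq_zero_AE) (use AE_supp in \<open>eventually_elim\<close>, use P elim \<open>z \<in> _\<close> in \<open>auto simp: hh_def\<close>)
        qed
      qed
    qed
  qed
next
  assume D0: "?D = 0"
  show ?P
  proof (rule ccontr)
    assume "\<not> ?P"
    then obtain x0 y0 z0 where s: "x0 \<in> measure_support \<mu>" "y0 \<in> measure_support \<mu>" "z0 \<in> measure_support \<mu>"
      and neg: "ff x0 y0 z0 < 0" by force
    define Oo where "Oo = {p::'a \<times> 'a \<times> 'a. ff (fst p) (fst (snd p)) (snd (snd p)) < 0}"
    have "open Oo" unfolding Oo_def ff_def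
      by (intro open_Collect_less continuous_intros)
    moreover have "(x0, y0, z0) \<in> Oo" using neg by (simp add: Oo_def)
    ultimately obtain U R where UR: "open U" "open R" "(x0, y0, z0) \<in> U \<times> R" "U \<times> R \<subseteq> Oo"
      by (rule open_prod_elim)
    then obtain V W where VW: "open V" "open W" "(y0, z0) \<in> V \<times> W" "V \<times> W \<subseteq> R"
      by (metis mem_Sigma_iff open_prod_elim)
    have neg2: "ff x y z < 0" if "x \<in> U" "y \<in> V" "z \<in> W" for x y z
    proof -
      have "(y, z) \<in> R" using that VW(4) by blast
      then have "(x, y, z) \<in> Oo" using that UR(4) by blast
      then show ?thesis by (simp add: Oo_def)
    qed
    have pos: "emeasure \<mu> U > 0" "emeasure \<mu> V > 0" "emeasure \<mu> W > 0"
      using s UR VW by (auto simp: measure_support_def)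
    have "AE z in \<mu>. (\<integral>y. \<integral>x. hh x y z \<partial>\<mu> \<partial>\<mu>) = 0"
      using D0 by (subst (asm) integral_nonneg_eq_0_iff_AE) (auto intro: I3h Bochner_Integration.integral_nonneg hh_nonneg)
    then obtain z where z: "z \<in> W" "(\<integral>y. \<integral>x. hh x y z \<partial>\<mu> \<partial>\<mu>) = 0"
      using AE_pick[OF _ open_sets[OF VW(2)] pos(3)] by blast
    have "AE y in \<mu>. (\<integral>x. hh x y z \<partial>\<mu>) = 0"
      using z(2) by (subst (asm) integral_nonneg_eq_0_iff_AE) (auto intro: I2h Bochner_Integration.integral_nonneg hh_nonneg)
    then obtain y where y: "y \<in> V" "(\<integral>x. hh x y z \<partial>\<mu>) = 0"
      using AE_pick[OF _ open_sets[OF VW(1)] pos(2)] by blast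
    have "AE x in \<mu>. hh x y z = 0"
      using y(2) by (subst (asm) integral_nonneg_eq_0_iff_AE) (auto intro: I1h hh_nonneg)
    then obtain x where x: "x \<in> U" "hh x y z = 0"
      using AE_pick[OF _ open_sets[OF UR(1)] pos(1)] by blast
    have "ff x y z < 0" using neg2 x(1) y(1) z(1) .
    then show False using x(2) by (simp add: hh_def)
  qed
qed

lemma alg_i: "i \<in> Basis \<Longrightarrow> (\<Sum>j\<in>Basis. (Bf i j - (if i = j then 1 / real DIM('a) else 0))\<^sup>2)
   = (\<Sum>j\<in>Basis. (Bf i j)\<^sup>2) - 2 * Bf i i / real DIM('a) + 1 / (real DIM('a))\<^sup>2"
proof -
  assume i: "i \<in> Basis"
  have "(\<Sum>j\<in>Basis. (Bf i j - (if i = j then 1 / real DIM('a) else 0))\<^sup>2)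
      = (\<Sum>j\<in>Basis. (Bf i j)\<^sup>2 - (if i = j then 2 * Bf i i / real DIM('a) - 1 / (real DIM('a))\<^sup>2 else 0))"
    by (rule sum.cong) (auto simp: power2_diff field_simps power2_eq_square)
  also have "\<dots> = (\<Sum>j\<in>Basis. (Bf i j)\<^sup>2) - 2 * Bf i i / real DIM('a) + 1 / (real DIM('a))\<^sup>2"
    using i by (simp add: sum_subtractf)
  finally show ?thesis .
qed

lemma alg: "(\<Sum>i\<in>Basis. \<Sum>j\<in>Basis. (Bf i j)\<^sup>2) - 1 / real DIM('a)
   = (\<Sum>i\<in>Basis. \<Sum>j\<in>Basis. (Bf i j - (if i = j then 1 / real DIM('a) else 0))\<^sup>2)"
proof -
  have "(\<Sum>i\<in>Basis. \<Sum>j\<in>Basis. (Bf i j - (if i = j then 1 / real DIM('a) else 0))\<^sup>2)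
     = (\<Sum>i\<in>Basis. (\<Sum>j\<in>Basis. (Bf i j)\<^sup>2) - 2 * Bf i i / real DIM('a) + 1 / (real DIM('a))\<^sup>2)"
    by (rule sum.cong[OF refl]) (rule alg_i)
  also have "\<dots> = (\<Sum>i\<in>Basis. \<Sum>j\<in>Basis. (Bf i j)\<^sup>2) - 2 * (\<Sum>i\<in>Basis. Bf i i) / real DIM('a)
      + real DIM('a) / (real DIM('a))\<^sup>2"
    by (simp add: sum.distrib sum_subtractf sum_divide_distrib[symmetric] sum_distrib_left[symmetric])
  also have "\<dots> = (\<Sum>i\<in>Basis. \<Sum>j\<in>Basis. (Bf i j)\<^sup>2) - 1 / real DIM('a)"
    by (simp add: trace1 power2_eq_square)
  finally show ?thesis by simp
qed

lemma dpos: "0 < real DIM('a)" by simp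

lemma a_ge: "1 / real DIM('a) \<le> (\<Sum>i\<in>Basis. \<Sum>j\<in>Basis. (Bf i j)\<^sup>2)"
proof -
  have "0 \<le> (\<Sum>i\<in>Basis. \<Sum>j\<in>Basis. (Bf i j - (if i = j then 1 / real DIM('a) else 0))\<^sup>2)"
    by (intro sum_nonneg) auto
  then show ?thesis using alg by linarith
qed

lemma T_ge: "(\<Sum>i\<in>Basis. \<Sum>j\<in>Basis. (Bf i j)\<^sup>2)\<^sup>2 \<le> (\<integral>z. (\<Sum>i\<in>Basis. (Bf i z)\<^sup>2) \<partial>\<mu>)"
  using order_trans[OF var_le T_ge_q2] unfolding int_q_val .

lemma iso_B: "isotropic \<mu> \<longleftrightarrow> (\<forall>i\<in>Basis. \<forall>j\<in>Basis. Bf i j = (if i = j then 1 / real DIM('a) else 0))"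
  unfolding isotropic_def Bf_def ..

lemma main:
  defines "L \<equiv> (\<integral>z. \<integral>y. \<integral>x. \<bar>ff x y z\<bar> \<partial>\<mu> \<partial>\<mu> \<partial>\<mu>)"
  shows "L \<ge> 1 / (real DIM('a))\<^sup>2 \<and> (L = 1 / (real DIM('a))\<^sup>2 \<longleftrightarrow> isotropic \<mu> \<and>
     (\<forall>x\<in>measure_support \<mu>. \<forall>y\<in>measure_support \<mu>. \<forall>z\<in>measure_support \<mu>. ff x y z \<ge> 0))"
proof -
  define d where "d = real DIM('a)"
  define a where "a = (\<Sum>i\<in>Basis. \<Sum>j\<in>Basis. (Bf i j)\<^sup>2)"
  define T where "T = (\<integral>z. (\<Sum>i\<in>Basis. (Bf i z)\<^sup>2) \<partial>\<mu>)"
  define D where "D = (\<integral>z. \<integral>y. \<integral>x. hh x y z \<partial>\<mu> \<partial>\<mu> \<partial>\<mu>)"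
  have LTD: "L = T + D" unfolding L_def T_def D_def by (rule D_eq)
  have D0: "0 \<le> D" unfolding D_def by (rule D_nonneg)
  have d0: "0 < d" unfolding d_def by simp
  have a1: "1 / d \<le> a" unfolding a_def d_def by (rule a_ge)
  have Ta: "a\<^sup>2 \<le> T" unfolding a_def T_def by (rule T_ge)
  have "(1 / d)\<^sup>2 \<le> a\<^sup>2" using a1 d0 by (intro power_mono) auto
  then have T1: "1 / d\<^sup>2 \<le> T" using Ta by (simp add: power_divide)
  have ge: "L \<ge> 1 / d\<^sup>2" using T1 D0 LTD by simp
  have eq: "L = 1 / d\<^sup>2 \<longleftrightarrow> isotropic \<mu> \<and>
     (\<forall>x\<in>measure_support \<mu>. \<forall>y\<in>measure_support \<mu>. \<forall>z\<in>measure_support \<mu>. ff x y z \<ge> 0)"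
  proof
    assume L1: "L = 1 / d\<^sup>2"
    then have "D = 0" "T = 1 / d\<^sup>2" using T1 D0 LTD by linarith+
    have a2: "a\<^sup>2 \<le> (1 / d)\<^sup>2" using Ta \<open>T = 1 / d\<^sup>2\<close> by (simp add: power_divide)
    have "a \<le> 1 / d" using power2_le_imp_le[OF a2] d0 by simp
    then have "(\<Sum>i\<in>Basis. \<Sum>j\<in>Basis. (Bf i j - (if i = j then 1 / d else 0))\<^sup>2) = 0"
      using alg a1 unfolding a_def d_def by linarith
    then have "\<forall>i\<in>Basis. (\<Sum>j\<in>Basis. (Bf i j - (if i = j then 1 / d else 0))\<^sup>2) = 0"
      using sum_nonneg_eq_0_iff[of Basis "\<lambda>i. (\<Sum>j\<in>Basis. (Bf i j - (if i = j then 1 / d else 0))\<^sup>2)"]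
      by (simp add: sum_nonneg)
    then have "\<forall>i\<in>Basis. \<forall>j\<in>Basis. (Bf i j - (if i = j then 1 / d else 0))\<^sup>2 = 0"
      using sum_nonneg_eq_0_iff[of Basis "\<lambda>j. (Bf i j - (if i = j then 1 / d else 0))\<^sup>2" for i]
      by simp
    then have "isotropic \<mu>" unfolding iso_B d_def by auto
    moreover have "\<forall>x\<in>measure_support \<mu>. \<forall>y\<in>measure_support \<mu>. \<forall>z\<in>measure_support \<mu>. ff x y z \<ge> 0"
      using \<open>D = 0\<close> D_zero_iff unfolding D_def by blast
    ultimately show "isotropic \<mu> \<and> (\<forall>x\<in>measure_support \<mu>. \<forall>y\<in>measure_support \<mu>. \<forall>z\<in>measure_support \<mu>. ff x y z \<ge> 0)" ..
  next
    assume H: "isotropic \<mu> \<and> (\<forall>x\<in>measure_support \<mu>. \<forall>y\<in>measure_support \<mu>. \<forall>z\<in>measure_support \<mu>. ff x y z \<ge> 0)"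
    then have "D = 0" using D_zero_iff unfolding D_def by blast
    have iso: "\<forall>i\<in>Basis. \<forall>j\<in>Basis. Bf i j = (if i = j then 1 / d else 0)"
      using H iso_B unfolding d_def by blast
    have Bz: "Bf i z = (z \<bullet> i) / d" if "i \<in> Basis" for i z
    proof -
      have "Bf i z = (\<Sum>j\<in>Basis. (z \<bullet> j) * (if i = j then 1 / d else 0))"
        by (subst B_lin2) (rule sum.cong, use iso that in auto)
      also have "\<dots> = (\<Sum>j\<in>Basis. if j = i then (z \<bullet> i) / d else 0)"
        by (rule sum.cong) auto
      also have "\<dots> = (z \<bullet> i) / d" using that by simp
      finally show ?thesis .
    qed
    have "T = (\<integral>z. 1 / d\<^sup>2 \<partial>\<mu>)"
      unfolding T_def
    proof (rule integral_cong_AE)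
      show "AE z in \<mu>. (\<Sum>i\<in>Basis. (Bf i z)\<^sup>2) = 1 / d\<^sup>2"
        using AE_S
      proof eventually_elim
        case (elim z)
        have "(\<Sum>i\<in>Basis. (Bf i z)\<^sup>2) = (\<Sum>i\<in>Basis. (z \<bullet> i) * (z \<bullet> i)) / d\<^sup>2"
          unfolding sum_divide_distrib by (rule sum.cong[OF refl]) (simp add: Bz power_divide power2_eq_square)
        also have "(\<Sum>i\<in>Basis. (z \<bullet> i) * (z \<bullet> i)) = 1"
          using elim by (simp add: euclidean_inner[symmetric] power2_norm_eq_inner[symmetric])
        finally show ?case by simp
      qed
    qed measurable
    then have "T = 1 / d\<^sup>2" by (simp add: prob_space)
    then show "L = 1 / d\<^sup>2" using LTD \<open>D = 0\<close> by simp
  qed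
  show ?thesis using ge eq unfolding d_def by blast
qed

end

theorem corollary4p3:
  fixes \<mu> :: "'a::euclidean_space measure"
  assumes "prob_space \<mu>"
    and "sets \<mu> = sets borel"
    and "emeasure \<mu> (sphere 0 1) = 1"
  shows "(\<integral>z. \<integral>y. \<integral>x. \<bar>(x \<bullet> y) * (x \<bullet> z) * (y \<bullet> z)\<bar> \<partial>\<mu> \<partial>\<mu> \<partial>\<mu>)
           \<ge> 1 / (real DIM('a))\<^sup>2
       \<and> ((\<integral>z. \<integral>y. \<integral>x. \<bar>(x \<bullet> y) * (x \<bullet> z) * (y \<bullet> z)\<bar> \<partial>\<mu> \<partial>\<mu> \<partial>\<mu>)
             = 1 / (real DIM('a))\<^sup>2
          \<longleftrightarrow> isotropic \<mu> \<and>
              (\<forall>x\<in>measure_support \<mu>. \<forall>y\<in>measure_support \<mu>. \<forall>z\<in>measure_support \<mu>.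
                 (x \<bullet> y) * (x \<bullet> z) * (y \<bullet> z) \<ge> 0))"
proof -
  interpret sph \<mu>
    using assms by (intro sph.intro sph_axioms.intro)
  show ?thesis using main unfolding ff_def .
qed

end
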